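(* Let $p,q,l,N\in\mathbb{Z}_{\geq 0}$, $s=p+q$, and let $M=(M_1,\dots,M_s)\in\mathrm{Sym}_N^{p}\times\mathrm{Alt}_N^{q}$. Suppose there is a subspace $V\subseteq\mathbb{C}^N$ of dimension $2^sl$ such that $M_1V+\dots+M_sV$ has dimension $s2^sl$. Then the Zariski closure of the orbit $\{(gM_1g^T,\dots,gM_sg^T):g\in\mathrm{GL}_N(\mathbb{C})\}$ contains a tuple $(M'_1,\dots,M'_s)\in\mathrm{Sym}_N^{p}\times\mathrm{Alt}_N^{q}$ such that for each $i$: (a) all entries $(M'_i)_{j,k}$ with $j,k>l$ are zero, and (b) the $N\times l$ matrix formed by the first $l$ columns of $M'_i$ has, in blocks of $l$ rows followed by a final block of $N-(s+1)l$ rows, first block $0_{l\times l}$, $(i+1)$-st block $\mathrm{Id}_l$, and all other blocks zero.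
   Context: $\mathrm{Sym}_N$ and $\mathrm{Alt}_N$ denote the spaces of symmetric, respectively skew-symmetric, complex $N\times N$ matrices; the first $p$ entries of a tuple are symmetric and the last $q$ are skew-symmetric. (Entries of $M'_i$ in the first $l$ rows are then determined by (b) and (skew-)symmetry.) *)

theory Defs
  imports "Jordan_Normal_Form.VS_Connect"
begin

inductive_set polyfun :: "('a \<Rightarrow> 'v \<Rightarrow> complex) \<Rightarrow> 'v set \<Rightarrow> ('a \<Rightarrow> complex) set"
  for coord :: "'a \<Rightarrow> 'v \<Rightarrow> complex" and vars :: "'v set" where
  const: "(\<lambda>_. c) \<in> polyfun coord vars"
| var: "v \<in> vars \<Longrightarrow> (\<lambda>x. coord x v) \<in> polyfun coord vars"
| add: "f \<in> polyfun coord vars \<Longrightarrow> g \<in> polyfun coord vars \<Longrightarrow> (\<lambda>x. f x + g x) \<in> polyfun coord vars"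
| mult: "f \<in> polyfun coord vars \<Longrightarrow> g \<in> polyfun coord vars \<Longrightarrow> (\<lambda>x. f x * g x) \<in> polyfun coord vars"

text \<open>Zariski closure of S inside the affine space X (X = all points whose coordinates
  are given by coord on vars).\<close>
definition zariski_closure ::
  "('a \<Rightarrow> 'v \<Rightarrow> complex) \<Rightarrow> 'v set \<Rightarrow> 'a set \<Rightarrow> 'a set \<Rightarrow> 'a set" where
  "zariski_closure coord vars X S =
     {x \<in> X. \<forall>f \<in> polyfun coord vars. (\<forall>y \<in> S. f y = 0) \<longrightarrow> f x = 0}"

definition tuple_space :: "nat \<Rightarrow> nat \<Rightarrow> complex mat list set" where
  "tuple_space s N = {Ms. length Ms = s \<and> (\<forall>i<s. Ms ! i \<in> carrier_mat N N)}"

definition tuple_coord :: "complex mat list \<Rightarrow> nat \<times> nat \<times> nat \<Rightarrow> complex" where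
  "tuple_coord Ms v = (case v of (i, j, k) \<Rightarrow> Ms ! i $$ (j, k))"

definition tuple_vars :: "nat \<Rightarrow> nat \<Rightarrow> (nat \<times> nat \<times> nat) set" where
  "tuple_vars s N = {0..<s} \<times> {0..<N} \<times> {0..<N}"

definition sym_alt_tuples :: "nat \<Rightarrow> nat \<Rightarrow> nat \<Rightarrow> complex mat list set" where
  "sym_alt_tuples p q N = {Ms \<in> tuple_space (p + q) N.
      (\<forall>i<p. transpose_mat (Ms ! i) = Ms ! i) \<and>
      (\<forall>i. p \<le> i \<and> i < p + q \<longrightarrow> transpose_mat (Ms ! i) = - (Ms ! i))}"

definition congr_orbit :: "nat \<Rightarrow> complex mat list \<Rightarrow> complex mat list set" where
  "congr_orbit N Ms = {map (\<lambda>A. g * A * transpose_mat g) Ms | g.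
      g \<in> carrier_mat N N \<and> invertible_mat g}"

definition csubspace :: "nat \<Rightarrow> complex vec set \<Rightarrow> bool" where
  "csubspace N W = VectorSpace.subspace class_ring W (module_vec TYPE(complex) N)"

definition cdim :: "nat \<Rightarrow> complex vec set \<Rightarrow> nat" where
  "cdim N W = vectorspace.dim class_ring ((module_vec TYPE(complex) N)\<lparr>carrier := W\<rparr>)"

definition cspan :: "nat \<Rightarrow> complex vec set \<Rightarrow> complex vec set" where
  "cspan N S = LinearCombinations.module.span class_ring (module_vec TYPE(complex) N) S"

definition image_sum :: "nat \<Rightarrow> complex mat list \<Rightarrow> complex vec set \<Rightarrow> complex vec set" where
  "image_sum N Ms V = cspan N (\<Union>i<length Ms. (\<lambda>v. (Ms ! i) *\<^sub>v v) ` V)"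

end

theory Submission
  imports Defs "Jordan_Normal_Form.DL_Rank" "Jordan_Normal_Form.Spectral_Radius"
begin
lemma congr_entry:
  fixes P F :: "complex mat"
  assumes P: "P \<in> carrier_mat n m" and F: "F \<in> carrier_mat n n" and a: "a < m" and b: "b < m"
  shows "(transpose_mat P * F * P) $$ (a,b) = col P a \<bullet> (F *\<^sub>v col P b)"
proof -
  have "transpose_mat P * F * P = transpose_mat P * (F * P)"
    using P F by (intro assoc_mult_mat) auto
  also have "\<dots> $$ (a,b) = row (transpose_mat P) a \<bullet> col (F * P) b"
    using P F a b by (intro index_mult_mat) auto
  also have "\<dots> = col P a \<bullet> (F *\<^sub>v col P b)"
  proof -
    have "row (transpose_mat P) a = col P a" using P a by (intro row_transpose) auto
    moreover have "col (F * P) b = F *\<^sub>v col P b" using P F b by (intro col_mult2) auto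
    ultimately show ?thesis by (simp only:)
  qed
  finally show ?thesis .
qed

lemma bil_transpose:
  fixes F :: "complex mat"
  assumes F: "F \<in> carrier_mat n n" and x: "x \<in> carrier_vec n" and y: "y \<in> carrier_vec n"
  shows "y \<bullet> (F *\<^sub>v x) = x \<bullet> (transpose_mat F *\<^sub>v y)"
proof -
  have "y \<bullet> (F *\<^sub>v x) = (transpose_mat F *\<^sub>v y) \<bullet> x"
    using transpose_vec_mult_scalar[OF F x y] by simp
  also have "\<dots> = x \<bullet> (transpose_mat F *\<^sub>v y)"
    using F x y by (intro comm_scalar_prod) auto
  finally show ?thesis .
qed

definition symskew :: "complex mat \<Rightarrow> bool" where
  "symskew F \<longleftrightarrow> transpose_mat F = F \<or> transpose_mat F = - F"

lemma symskew_congr: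
  fixes F E :: "complex mat"
  assumes F: "F \<in> carrier_mat n n" and E: "E \<in> carrier_mat n k" and s: "symskew F"
  shows "symskew (transpose_mat E * F * E)"
proof -
  have T: "transpose_mat (transpose_mat E * F * E) = transpose_mat E * transpose_mat F * E"
  proof -
    have "transpose_mat (transpose_mat E * F * E) = transpose_mat E * transpose_mat (transpose_mat E * F)"
      using F E by (intro transpose_mult[of _ k n]) auto
    also have "transpose_mat (transpose_mat E * F) = transpose_mat F * E"
      using F E by (subst transpose_mult[of _ k n _ n]) auto
    also have "transpose_mat E * (transpose_mat F * E) = transpose_mat E * transpose_mat F * E"
      using F E by (intro assoc_mult_mat[symmetric, of _ k n _ n _ k]) auto
    finally show ?thesis .
  qed
  show ?thesis
  proof (cases "transpose_mat F = F")
    case True then show ?thesis using T unfolding symskew_def by simp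
  next
    case False
    then have "transpose_mat F = - F" using s unfolding symskew_def by auto
    then have "transpose_mat (transpose_mat E * F * E) = - (transpose_mat E * F * E)"
      using T F E by (simp add: uminus_mult_right_mat uminus_mult_left_mat)
    then show ?thesis unfolding symskew_def by simp
  qed
qed

lemma bil_sym:
  fixes F :: "complex mat"
  assumes F: "F \<in> carrier_mat n n" and x: "x \<in> carrier_vec n" and y: "y \<in> carrier_vec n"
    and s: "symskew F" and z: "x \<bullet> (F *\<^sub>v y) = 0"
  shows "y \<bullet> (F *\<^sub>v x) = 0"
proof -
  have "y \<bullet> (F *\<^sub>v x) = x \<bullet> (transpose_mat F *\<^sub>v y)" using bil_transpose[OF F x y] .
  moreover have "x \<bullet> ((- F) *\<^sub>v y) = - (x \<bullet> (F *\<^sub>v y))"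
    using F x y by (simp add: scalar_prod_uminus_right)
  ultimately show ?thesis using s z unfolding symskew_def by auto
qed

lemma sum_two:
  fixes f :: "nat \<Rightarrow> 'a::comm_monoid_add"
  assumes "a < n" "q < n" "a \<noteq> q" "\<And>i. i < n \<Longrightarrow> i \<noteq> a \<Longrightarrow> i \<noteq> q \<Longrightarrow> f i = 0"
  shows "sum f {0..<n} = f a + f q"
proof -
  have "sum f {0..<n} = sum f {a,q}"
    using assms by (intro sum.mono_neutral_right) auto
  then show ?thesis using assms by simp
qed

lemma sum_one:
  fixes f :: "nat \<Rightarrow> 'a::comm_monoid_add"
  assumes "a < n" "\<And>i. i < n \<Longrightarrow> i \<noteq> a \<Longrightarrow> f i = 0"
  shows "sum f {0..<n} = f a"
proof -
  have "sum f {0..<n} = sum f {a}"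
    using assms by (intro sum.mono_neutral_right) auto
  then show ?thesis using assms by simp
qed

lemma quad_root:
  fixes a b c :: complex
  assumes "a \<noteq> 0"
  shows "\<exists>t. a * t^2 + b * t + c = 0"
proof -
  define s where "s = csqrt (b^2 - 4*a*c)"
  have s2: "s^2 = b^2 - 4*a*c" unfolding s_def by simp
  define t where "t = (- b + s) / (2*a)"
  have "a * t^2 + b * t + c = (s^2 - (b^2 - 4*a*c)) / (4*a)"
    unfolding t_def using assms by (simp add: field_simps power2_eq_square)
  then show ?thesis using s2 by auto
qed

lemma iso_vec:
  fixes F :: "complex mat"
  assumes F: "F \<in> carrier_mat n n" and n: "2 \<le> n"
  shows "\<exists>x r. x \<in> carrier_vec n \<and> r < n \<and> x $ r \<noteq> 0 \<and> x \<bullet> (F *\<^sub>v x) = 0"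
proof (cases "F $$ (0,0) = 0")
  case True
  define x :: "complex vec" where "x = vec n (\<lambda>i. if i = 0 then 1 else 0)"
  have Fx: "(F *\<^sub>v x) $ i = F $$ (i,0)" if "i < n" for i
  proof -
    have "(F *\<^sub>v x) $ i = (\<Sum>j = 0..<n. F $$ (i,j) * x $ j)"
      using F that by (simp add: mult_mat_vec_def scalar_prod_def x_def)
    also have "\<dots> = F $$ (i,0) * x $ 0"
      using n by (intro sum_one) (auto simp: x_def)
    finally show ?thesis using n by (simp add: x_def)
  qed
  have "x \<bullet> (F *\<^sub>v x) = (\<Sum>i = 0..<n. x $ i * (F *\<^sub>v x) $ i)"
    using F by (simp add: scalar_prod_def x_def)
  also have "\<dots> = x $ 0 * (F *\<^sub>v x) $ 0"
    using n by (intro sum_one) (auto simp: x_def)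
  also have "\<dots> = 0" using Fx[of 0] n True by (simp add: x_def)
  finally show ?thesis using n by (intro exI[of _ x] exI[of _ 0]) (auto simp: x_def)
next
  case False
  obtain t where t: "F $$ (0,0) * t^2 + (F $$ (0,1) + F $$ (1,0)) * t + F $$ (1,1) = 0"
    using quad_root[OF False] by blast
  define x :: "complex vec" where "x = vec n (\<lambda>i. if i = 0 then t else if i = 1 then 1 else 0)"
  have Fx: "(F *\<^sub>v x) $ i = F $$ (i,0) * t + F $$ (i,1)" if "i < n" for i
  proof -
    have "(F *\<^sub>v x) $ i = (\<Sum>j = 0..<n. F $$ (i,j) * x $ j)"
      using F that by (simp add: mult_mat_vec_def scalar_prod_def x_def)
    also have "\<dots> = F $$ (i,0) * x $ 0 + F $$ (i,1) * x $ 1"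
      using n by (intro sum_two) (auto simp: x_def)
    finally show ?thesis using n by (simp add: x_def)
  qed
  have "x \<bullet> (F *\<^sub>v x) = (\<Sum>i = 0..<n. x $ i * (F *\<^sub>v x) $ i)"
    using F by (simp add: scalar_prod_def x_def)
  also have "\<dots> = x $ 0 * (F *\<^sub>v x) $ 0 + x $ 1 * (F *\<^sub>v x) $ 1"
    using n by (intro sum_two) (auto simp: x_def)
  also have "\<dots> = t * (F $$ (0,0) * t + F $$ (0,1)) + (F $$ (1,0) * t + F $$ (1,1))"
    using Fx[of 0] Fx[of 1] n by (simp add: x_def)
  also have "\<dots> = 0" using t by (simp add: algebra_simps power2_eq_square)
  finally show ?thesis using n by (intro exI[of _ x] exI[of _ 1]) (auto simp: x_def)
qed

lemma iso_subspace:
  fixes F :: "complex mat"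
  assumes "F \<in> carrier_mat n n" "symskew F" "2*m \<le> n"
  shows "\<exists>P \<in> carrier_mat n m. (\<forall>v \<in> carrier_vec m. P *\<^sub>v v = 0\<^sub>v n \<longrightarrow> v = 0\<^sub>v m)
            \<and> transpose_mat P * F * P = 0\<^sub>m m m"
  using assms
proof (induction n arbitrary: F m rule: less_induct)
  case (less n F m)
  note F = less.prems(1) and sF = less.prems(2) and nm = less.prems(3)
  show ?case
  proof (cases "m = 0")
    case True
    have "0\<^sub>m n 0 \<in> carrier_mat n m" using True by simp
    moreover have "\<forall>v \<in> carrier_vec m. (0\<^sub>m n 0 :: complex mat) *\<^sub>v v = 0\<^sub>v n \<longrightarrow> v = 0\<^sub>v m"
    proof (intro ballI impI)
      fix v :: "complex vec" assume "v \<in> carrier_vec m"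
      then have "dim_vec v = 0" using True by simp
      then show "v = 0\<^sub>v m" using True by (intro eq_vecI) auto
    qed
    moreover have "transpose_mat (0\<^sub>m n 0) * F * 0\<^sub>m n 0 = 0\<^sub>m m m"
      using True F by (intro eq_matI) auto
    ultimately show ?thesis by blast
  next
    case False
    then have n2: "2 \<le> n" using nm by auto
    obtain x r where x: "x \<in> carrier_vec n" and r: "r < n" and xr: "x $ r \<noteq> 0"
      and xx: "x \<bullet> (F *\<^sub>v x) = 0"
      using iso_vec[OF F n2] by blast
    define u where "u = transpose_mat F *\<^sub>v x"
    have u: "u \<in> carrier_vec n" using F x unfolding u_def by simp
    have bu: "x \<bullet> (F *\<^sub>v z) = u \<bullet> z" if z: "z \<in> carrier_vec n" for z
      using transpose_vec_mult_scalar[OF F z x] unfolding u_def by simp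
    obtain q where q: "q < n" "q \<noteq> r" and uq: "u $ q = 0 \<Longrightarrow> (\<forall>k<n. k \<noteq> r \<longrightarrow> u $ k = 0)"
    proof (cases "\<exists>k<n. k \<noteq> r \<and> u $ k \<noteq> 0")
      case True
      then obtain k where "k < n" "k \<noteq> r" "u $ k \<noteq> 0" by blast
      then show ?thesis using that by blast
    next
      case False
      show ?thesis
        by (rule that[of "if r = 0 then 1 else 0"]) (use False n2 in auto)
    qed
    define ks where "ks = filter (\<lambda>k. k \<noteq> r \<and> k \<noteq> q) [0..<n]"
    have len: "length ks = n - 2"
    proof -
      have "length ks = card {i. i < n \<and> i \<noteq> r \<and> i \<noteq> q}"
        unfolding ks_def length_filter_conv_card by (intro arg_cong[where f=card] Collect_cong) auto
      also have "{i. i < n \<and> i \<noteq> r \<and> i \<noteq> q} = {0..<n} - {r,q}" by auto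
      also have "card \<dots> = n - 2" using q r by (subst card_Diff_subset) auto
      finally show ?thesis .
    qed
    have ks_set: "ks ! j < n \<and> ks ! j \<noteq> r \<and> ks ! j \<noteq> q" if "j < n - 2" for j
    proof -
      have "ks ! j \<in> set ks" using that len by simp
      then show ?thesis unfolding ks_def by auto
    qed
    have ks_dist: "distinct ks" unfolding ks_def by simp
    have ks_inj: "j = j'" if "j < n - 2" "j' < n - 2" "ks ! j = ks ! j'" for j j'
      using that ks_dist len nth_eq_iff_index_eq by metis
    define E :: "complex mat" where "E = mat n (n-2) (\<lambda>(i,j). if i = ks ! j then 1
        else if i = q then - (u $ (ks ! j)) / u $ q else 0)"
    have E: "E \<in> carrier_mat n (n-2)" unfolding E_def by simp
    have Er: "(E *\<^sub>v w) $ r = 0" if w: "w \<in> carrier_vec (n-2)" for w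
    proof -
      have "(E *\<^sub>v w) $ r = (\<Sum>j = 0..<n-2. E $$ (r,j) * w $ j)"
        using E w r by (simp add: mult_mat_vec_def scalar_prod_def)
      also have "\<dots> = 0"
      proof (intro sum.neutral ballI)
        fix j assume "j \<in> {0..<n-2}"
        then have "E $$ (r,j) = 0" using ks_set[of j] q r by (auto simp: E_def)
        then show "E $$ (r,j) * w $ j = 0" by simp
      qed
      finally show ?thesis .
    qed
    have ETu: "transpose_mat E *\<^sub>v u = 0\<^sub>v (n-2)"
    proof (rule eq_vecI)
      fix j assume "j < dim_vec (0\<^sub>v (n-2) :: complex vec)"
      then have j: "j < n - 2" by simp
      have "(transpose_mat E *\<^sub>v u) $ j = (\<Sum>i = 0..<n. E $$ (i,j) * u $ i)"
        using E u j by (simp add: mult_mat_vec_def scalar_prod_def)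
      also have "\<dots> = E $$ (ks!j,j) * u $ (ks!j) + E $$ (q,j) * u $ q"
        using ks_set[OF j] q j by (intro sum_two) (auto simp: E_def)
      also have "\<dots> = u $ (ks!j) - u $ (ks!j) / u $ q * u $ q"
        using ks_set[OF j] q j by (simp add: E_def)
      also have "\<dots> = 0"
        using uq ks_set[OF j] by (cases "u $ q = 0") auto
      finally show "(transpose_mat E *\<^sub>v u) $ j = 0\<^sub>v (n-2) $ j" using j by simp
    qed (use E in simp)
    have Eu: "u \<bullet> (E *\<^sub>v w) = 0" if w: "w \<in> carrier_vec (n-2)" for w
    proof -
      have "u \<bullet> (E *\<^sub>v w) = (transpose_mat E *\<^sub>v u) \<bullet> w"
        using transpose_vec_mult_scalar[OF E w u] by simp
      then show ?thesis using ETu w by simp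
    qed
    have Ek: "w = 0\<^sub>v (n-2)" if w: "w \<in> carrier_vec (n-2)" and Ew: "E *\<^sub>v w = 0\<^sub>v n" for w
    proof (rule eq_vecI)
      fix j assume "j < dim_vec (0\<^sub>v (n-2) :: complex vec)"
      then have j: "j < n - 2" by simp
      have "(E *\<^sub>v w) $ (ks!j) = (\<Sum>j' = 0..<n-2. E $$ (ks!j,j') * w $ j')"
        using E w ks_set[OF j] by (simp add: mult_mat_vec_def scalar_prod_def)
      also have "\<dots> = E $$ (ks!j,j) * w $ j"
        using j ks_set[OF j] ks_inj[OF j] by (intro sum_one) (auto simp: E_def)
      also have "\<dots> = w $ j" using j ks_set[OF j] by (simp add: E_def)
      finally show "w $ j = 0\<^sub>v (n-2) $ j" using Ew ks_set[OF j] j by simp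
    qed (use w in simp)
    define F' where "F' = transpose_mat E * F * E"
    have F': "F' \<in> carrier_mat (n-2) (n-2)" using E F unfolding F'_def by simp
    have sF': "symskew F'" unfolding F'_def using symskew_congr[OF F E sF] .
    have "n - 2 < n" "2 * (m-1) \<le> n - 2" using n2 nm by auto
    from less.IH[OF this(1) F' sF' this(2)] obtain P' where P': "P' \<in> carrier_mat (n-2) (m-1)"
      and P'k: "\<forall>v \<in> carrier_vec (m-1). P' *\<^sub>v v = 0\<^sub>v (n-2) \<longrightarrow> v = 0\<^sub>v (m-1)"
      and P'iso: "transpose_mat P' * F' * P' = 0\<^sub>m (m-1) (m-1)" by blast
    define P where "P = mat n m (\<lambda>(i,a). if a = 0 then x $ i else (E * P') $$ (i, a-1))"
    have P: "P \<in> carrier_mat n m" unfolding P_def by simp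
    have EP': "E * P' \<in> carrier_mat n (m-1)" using E P' by simp
    have col0: "col P 0 = x"
      using False x unfolding P_def by (intro eq_vecI) auto
    have cola: "col P a = E *\<^sub>v col P' (a-1)" if "0 < a" "a < m" for a
    proof -
      have "col P a = col (E * P') (a-1)"
        using that EP' E unfolding P_def by (intro eq_vecI) auto
      also have "\<dots> = E *\<^sub>v col P' (a-1)" using that E P' by (intro col_mult2) auto
      finally show ?thesis .
    qed
    have colP': "col P' b \<in> carrier_vec (n-2)" for b
      using P' col_dim[of P' b] by (metis carrier_matD(1))
    have iso: "transpose_mat P * F * P = 0\<^sub>m m m"
    proof (rule eq_matI)
      fix a b assume ab: "a < dim_row (0\<^sub>m m m :: complex mat)" "b < dim_col (0\<^sub>m m m :: complex mat)"
      then have a: "a < m" and b: "b < m" by auto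
      have "(transpose_mat P * F * P) $$ (a,b) = col P a \<bullet> (F *\<^sub>v col P b)"
        using congr_entry[OF P F a b] .
      also have "\<dots> = 0"
      proof (cases "a = 0")
        case a0: True
        show ?thesis
        proof (cases "b = 0")
          case True then show ?thesis using a0 col0 xx by simp
        next
          case b0: False
          have "x \<bullet> (F *\<^sub>v (E *\<^sub>v col P' (b-1))) = 0"
            using bu[OF mult_mat_vec_carrier[OF E colP']] Eu[OF colP'] by simp
          then show ?thesis using a0 b0 b col0 cola by simp
        qed
      next
        case a0: False
        have Ea: "E *\<^sub>v col P' (a-1) \<in> carrier_vec n" using E colP' by simp
        show ?thesis
        proof (cases "b = 0")
          case b0: True
          have "x \<bullet> (F *\<^sub>v (E *\<^sub>v col P' (a-1))) = 0"
            using bu[OF Ea] Eu[OF colP'] by simp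
          from bil_sym[OF F x Ea sF this]
          show ?thesis using a0 b0 a col0 cola by simp
        next
          case b0: False
          let ?pa = "col P' (a-1)" and ?pb = "col P' (b-1)"
          have "(E *\<^sub>v ?pa) \<bullet> (F *\<^sub>v (E *\<^sub>v ?pb)) = ?pa \<bullet> (transpose_mat E *\<^sub>v (F *\<^sub>v (E *\<^sub>v ?pb)))"
          proof -
            have z: "F *\<^sub>v (E *\<^sub>v ?pb) \<in> carrier_vec n" using F E colP' by simp
            have "(transpose_mat E *\<^sub>v (F *\<^sub>v (E *\<^sub>v ?pb))) \<bullet> ?pa = (F *\<^sub>v (E *\<^sub>v ?pb)) \<bullet> (E *\<^sub>v ?pa)"
              using transpose_vec_mult_scalar[OF E colP' z] .
            have ET: "transpose_mat E *\<^sub>v (F *\<^sub>v (E *\<^sub>v ?pb)) \<in> carrier_vec (n-2)"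
              using E z by simp
            have "(E *\<^sub>v ?pa) \<bullet> (F *\<^sub>v (E *\<^sub>v ?pb)) = (F *\<^sub>v (E *\<^sub>v ?pb)) \<bullet> (E *\<^sub>v ?pa)"
              using comm_scalar_prod[OF Ea z] .
            also have "\<dots> = (transpose_mat E *\<^sub>v (F *\<^sub>v (E *\<^sub>v ?pb))) \<bullet> ?pa"
              using \<open>(transpose_mat E *\<^sub>v (F *\<^sub>v (E *\<^sub>v ?pb))) \<bullet> ?pa = (F *\<^sub>v (E *\<^sub>v ?pb)) \<bullet> (E *\<^sub>v ?pa)\<close> by simp
            also have "\<dots> = ?pa \<bullet> (transpose_mat E *\<^sub>v (F *\<^sub>v (E *\<^sub>v ?pb)))"
              using comm_scalar_prod[OF ET colP'] .
            finally show ?thesis .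
          qed
          also have "transpose_mat E *\<^sub>v (F *\<^sub>v (E *\<^sub>v ?pb)) = F' *\<^sub>v ?pb"
            unfolding F'_def using E F colP'
            by (simp add: assoc_mult_mat_vec[of _ "n-2" n _ "n-2"] assoc_mult_mat_vec[of _ n n _ "n-2"])
          also have "?pa \<bullet> (F' *\<^sub>v ?pb) = (transpose_mat P' * F' * P') $$ (a-1,b-1)"
            using congr_entry[OF P' F', of "a-1" "b-1"] a b a0 b0 by simp
          also have "\<dots> = 0" using P'iso a b a0 b0 by simp
          finally show ?thesis using a0 b0 a b cola by simp
        qed
      qed
      finally show "(transpose_mat P * F * P) $$ (a,b) = 0\<^sub>m m m $$ (a,b)" using a b by simp
    qed (use P F in auto)
    have kern: "v = 0\<^sub>v m" if v: "v \<in> carrier_vec m" and Pv: "P *\<^sub>v v = 0\<^sub>v n" for v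
    proof -
      define v' where "v' = vec (m-1) (\<lambda>a. v $ (a+1))"
      have v': "v' \<in> carrier_vec (m-1)" unfolding v'_def by simp
      have ent: "(P *\<^sub>v v) $ i = v $ 0 * x $ i + (E *\<^sub>v (P' *\<^sub>v v')) $ i" if i: "i < n" for i
      proof -
        have mS: "m = Suc (m-1)" using False by simp
        have "(P *\<^sub>v v) $ i = (\<Sum>a = 0..<m. P $$ (i,a) * v $ a)"
          using P v i by (simp add: mult_mat_vec_def scalar_prod_def)
        also have "\<dots> = P $$ (i,0) * v $ 0 + (\<Sum>a = 0..<m-1. P $$ (i,Suc a) * v $ Suc a)"
          by (subst mS, subst sum.atLeast0_lessThan_Suc_shift) (simp add: o_def)
        also have "(\<Sum>a = 0..<m-1. P $$ (i,Suc a) * v $ Suc a) = (\<Sum>a = 0..<m-1. (E * P') $$ (i,a) * v' $ a)"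
          using i unfolding P_def v'_def by (intro sum.cong) auto
        also have "\<dots> = ((E * P') *\<^sub>v v') $ i"
          using EP' v' i E P' by (simp add: mult_mat_vec_def scalar_prod_def)
        also have "(E * P') *\<^sub>v v' = E *\<^sub>v (P' *\<^sub>v v')"
          using E P' v' by (intro assoc_mult_mat_vec) auto
        finally show ?thesis using i False by (simp add: P_def)
      qed
      have v0: "v $ 0 = 0"
      proof -
        have "v $ 0 * x $ r = 0" using ent[OF r] Pv r Er[of "P' *\<^sub>v v'"] P' v' by simp
        then show ?thesis using xr by simp
      qed
      have "E *\<^sub>v (P' *\<^sub>v v') = 0\<^sub>v n"
      proof (rule eq_vecI)
        fix i assume "i < dim_vec (0\<^sub>v n :: complex vec)"
        then have i: "i < n" by simp
        show "(E *\<^sub>v (P' *\<^sub>v v')) $ i = 0\<^sub>v n $ i" using ent[OF i] Pv v0 i by simp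
      qed (use E in simp)
      then have "P' *\<^sub>v v' = 0\<^sub>v (n-2)" using Ek P' v' by simp
      then have v'0: "v' = 0\<^sub>v (m-1)" using P'k v' by blast
      show ?thesis
      proof (rule eq_vecI)
        fix a assume "a < dim_vec (0\<^sub>v m :: complex vec)"
        then have a: "a < m" by simp
        show "v $ a = 0\<^sub>v m $ a"
        proof (cases a)
          case 0 then show ?thesis using v0 a by simp
        next
          case (Suc a')
          then have "v' $ a' = 0" using v'0 a by simp
          then show ?thesis using Suc a unfolding v'_def by simp
        qed
      qed (use v in simp)
    qed
    show ?thesis using P iso kern by blast
  qed
qed

lemma congr_comp:
  fixes P1 P2 G :: "complex mat"
  assumes P1: "P1 \<in> carrier_mat n h" and P2: "P2 \<in> carrier_mat h l" and G: "G \<in> carrier_mat n n"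
  shows "transpose_mat (P1 * P2) * G * (P1 * P2) = transpose_mat P2 * (transpose_mat P1 * G * P1) * P2"
proof -
  have "transpose_mat (P1 * P2) = transpose_mat P2 * transpose_mat P1"
    using P1 P2 by (rule transpose_mult)
  then have "transpose_mat (P1 * P2) * G * (P1 * P2) = transpose_mat P2 * transpose_mat P1 * G * (P1 * P2)"
    by simp
  also have "\<dots> = transpose_mat P2 * (transpose_mat P1 * G) * (P1 * P2)"
    using P1 P2 G by (subst assoc_mult_mat[of _ l h _ n _ n]) auto
  also have "\<dots> = transpose_mat P2 * (transpose_mat P1 * G) * P1 * P2"
    using P1 P2 G by (subst assoc_mult_mat[of _ l n _ h _ l, symmetric]) auto
  also have "\<dots> = transpose_mat P2 * (transpose_mat P1 * G * P1) * P2"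
    using P1 P2 G by (subst assoc_mult_mat[of _ l h _ n _ h]) auto
  finally show ?thesis .
qed

lemma iso_multi:
  fixes Fs :: "complex mat list"
  assumes "\<forall>F \<in> set Fs. F \<in> carrier_mat n n \<and> symskew F" "n = 2 ^ length Fs * l"
  shows "\<exists>P \<in> carrier_mat n l. (\<forall>v \<in> carrier_vec l. P *\<^sub>v v = 0\<^sub>v n \<longrightarrow> v = 0\<^sub>v l)
            \<and> (\<forall>F \<in> set Fs. transpose_mat P * F * P = 0\<^sub>m l l)"
  using assms
proof (induction "length Fs" arbitrary: Fs n)
  case 0
  then have n: "n = l" by simp
  have Fs: "Fs = []" using 0 by simp
  have "1\<^sub>m l \<in> carrier_mat n l" using n by simp
  moreover have "\<forall>v \<in> carrier_vec l. (1\<^sub>m l :: complex mat) *\<^sub>v v = 0\<^sub>v n \<longrightarrow> v = 0\<^sub>v l"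
    using n by auto
  ultimately show ?case using Fs by (intro bexI[of _ "1\<^sub>m l"]) auto
next
  case (Suc k FFs)
  then obtain F Fs where FFs: "FFs = F # Fs" by (cases FFs) auto
  have k: "k = length Fs" using Suc.hyps(2) FFs by simp
  have prems1: "\<forall>F \<in> set (F # Fs). F \<in> carrier_mat n n \<and> symskew F" using Suc.prems(1) FFs by simp
  have prems2: "n = 2 ^ length (F # Fs) * l" using Suc.prems(2) FFs by simp
  define h where "h = 2 ^ length Fs * l"
  have n: "n = 2 * h" using prems2 unfolding h_def by simp
  have F: "F \<in> carrier_mat n n" "symskew F" using prems1 by auto
  have "2 * h \<le> n" using n by simp
  from iso_subspace[OF F(1) F(2) this] obtain P1 where P1: "P1 \<in> carrier_mat n h"
    and P1k: "\<forall>v \<in> carrier_vec h. P1 *\<^sub>v v = 0\<^sub>v n \<longrightarrow> v = 0\<^sub>v h"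
    and P1i: "transpose_mat P1 * F * P1 = 0\<^sub>m h h"
    by blast
  define Gs where "Gs = map (\<lambda>G. transpose_mat P1 * G * P1) Fs"
  have "\<forall>G \<in> set Gs. G \<in> carrier_mat h h \<and> symskew G"
    unfolding Gs_def using prems1 P1 symskew_congr[of _ n P1 h] by auto
  moreover have "h = 2 ^ length Gs * l" unfolding Gs_def h_def by simp
  moreover have lenG: "k = length Gs" using k unfolding Gs_def by simp
  ultimately obtain P2 where P2: "P2 \<in> carrier_mat h l"
    and P2k: "\<forall>v \<in> carrier_vec l. P2 *\<^sub>v v = 0\<^sub>v h \<longrightarrow> v = 0\<^sub>v l"
    and P2i: "\<forall>G \<in> set Gs. transpose_mat P2 * G * P2 = 0\<^sub>m l l"
    using Suc.hyps(1) by blast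
  have P: "P1 * P2 \<in> carrier_mat n l" using P1 P2 by simp
  have Pk: "\<forall>v \<in> carrier_vec l. (P1 * P2) *\<^sub>v v = 0\<^sub>v n \<longrightarrow> v = 0\<^sub>v l"
  proof (intro ballI impI)
    fix v :: "complex vec" assume v: "v \<in> carrier_vec l" and Pv: "(P1 * P2) *\<^sub>v v = 0\<^sub>v n"
    have "P1 *\<^sub>v (P2 *\<^sub>v v) = 0\<^sub>v n" using Pv assoc_mult_mat_vec[OF P1 P2 v] by simp
    then have "P2 *\<^sub>v v = 0\<^sub>v h" using P1k P2 v by simp
    then show "v = 0\<^sub>v l" using P2k v by simp
  qed
  have Pi: "\<forall>G \<in> set FFs. transpose_mat (P1 * P2) * G * (P1 * P2) = 0\<^sub>m l l"
  proof
    fix G assume G: "G \<in> set FFs"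
    then have Gc: "G \<in> carrier_mat n n" using prems1 FFs by auto
    have eq: "transpose_mat (P1 * P2) * G * (P1 * P2) = transpose_mat P2 * (transpose_mat P1 * G * P1) * P2"
      using congr_comp[OF P1 P2 Gc] .
    show "transpose_mat (P1 * P2) * G * (P1 * P2) = 0\<^sub>m l l"
    proof (cases "G = F")
      case True
      then show ?thesis unfolding eq using P1i P2 by simp
    next
      case False
      then have "G \<in> set Fs" using G FFs by simp
      then have "transpose_mat P1 * G * P1 \<in> set Gs" unfolding Gs_def by simp
      then show ?thesis unfolding eq using P2i by simp
    qed
  qed
  show ?case using P Pk Pi by blast
qed

lemma subspace_basis:
  fixes V :: "complex vec set"
  assumes V: "csubspace N V"
  shows "\<exists>bs. set bs \<subseteq> V \<and> V \<subseteq> cspan N (set bs) \<and> length bs = cdim N V"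
proof -
  interpret VS: vec_space "TYPE(complex)" N .
  have sub: "VectorSpace.subspace class_ring V VS.V" using V unfolding csubspace_def by simp
  interpret W: vectorspace class_ring "VS.vs V" using VS.subspace_is_vs[OF sub] .
  have cW: "carrier (VS.vs V) = V" by simp
  have VN: "V \<subseteq> carrier_vec N" using sub unfolding VectorSpace.subspace_def submodule_def by auto
  have smod: "submodule class_ring V VS.V" using sub unfolding VectorSpace.subspace_def by simp
  have bound: "finite A \<and> card A \<le> N" if "A \<subseteq> carrier (VS.vs V) \<and> W.lin_indpt A" for A
  proof -
    have AV: "A \<subseteq> V" using that by simp
    have "VS.lin_indpt A" using that VS.span_li_not_depend(2)[OF AV smod] by simp
    moreover have "A \<subseteq> carrier_vec N" using AV VN by auto
    ultimately show ?thesis using VS.li_le_dim[of A] VS.fin_dim VS.dim_is_n by simp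
  qed
  have "{} \<subseteq> carrier (VS.vs V) \<and> W.lin_indpt {}"
    unfolding W.lin_dep_def by auto
  from maximal_exists[of "\<lambda>A. A \<subseteq> carrier (VS.vs V) \<and> W.lin_indpt A", OF bound this]
  obtain A where A: "finite A" "maximal A (\<lambda>A. A \<subseteq> carrier (VS.vs V) \<and> W.lin_indpt A)" by blast
  have bA: "W.basis A" using W.max_li_is_basis[OF A(2)] .
  have dim: "W.dim = card A" using W.dim_basis[OF A(1) bA] .
  have AV: "A \<subseteq> V" using bA unfolding W.basis_def by simp
  have "W.span A = V" using bA unfolding W.basis_def by simp
  then have spanA: "VS.span A = V" using VS.span_li_not_depend(1)[OF AV smod] by simp
  obtain bs where bs: "set bs = A" "distinct bs" using finite_distinct_list[OF A(1)] by blast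
  have "length bs = card A" using bs distinct_card by fastforce
  moreover have "cdim N V = W.dim" unfolding cdim_def by simp
  ultimately show ?thesis using bs AV spanA dim unfolding cspan_def by (intro exI[of _ bs]) auto
qed

lemma (in vec_space) rank_full_distinct:
  assumes A: "A \<in> carrier_mat n nc" and r: "rank A = nc"
  shows "distinct (cols A)"
proof (rule ccontr)
  assume nd: "\<not> distinct (cols A)"
  obtain S where S: "maximal S (\<lambda>T. T \<subseteq> set (cols A) \<and> lin_indpt T)"
    using maximal_exists[of "(\<lambda>T. T \<subseteq> set (cols A) \<and> lin_indpt T)" "card (set (cols A))" "{}"]
    by (meson List.finite_set card_mono empty_iff empty_subsetI finite_lin_indpt2 rev_finite_subset)
  then have "card S \<le> card (set (cols A))" by (simp add: card_mono maximal_def)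
  moreover have "card (set (cols A)) < length (cols A)"
    using nd card_distinct nat_less_le card_length by metis
  ultimately have "card S < nc" using A by simp
  then show False using rank_card_indpt[OF A S] r by simp
qed

lemma block_mat_kernel:
  fixes Ms :: "complex mat list" and bs :: "complex vec list" and V :: "complex vec set"
  assumes Ms: "\<forall>i<length Ms. Ms ! i \<in> carrier_mat N N"
    and bsV: "set bs \<subseteq> V" and Vsp: "V \<subseteq> cspan N (set bs)" and bsN: "set bs \<subseteq> carrier_vec N"
    and d: "length bs = d"
    and dimV: "cdim N (image_sum N Ms V) = length Ms * d"
  shows "(\<forall>v \<in> carrier_vec (length Ms * d).
           mat N (length Ms * d) (\<lambda>(r,c). (Ms ! (c div d) * mat_of_cols N bs) $$ (r, c mod d)) *\<^sub>v v = 0\<^sub>v N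
           \<longrightarrow> v = 0\<^sub>v (length Ms * d)) \<and> length Ms * d \<le> N"
proof -
  interpret VS: vec_space "TYPE(complex)" N .
  define s where "s = length Ms"
  define B where "B = mat_of_cols N bs"
  define C where "C = mat N (s * d) (\<lambda>(r,c). (Ms ! (c div d) * B) $$ (r, c mod d))"
  have B: "B \<in> carrier_mat N d" unfolding B_def using d mat_of_cols_carrier(1)[of N bs] by simp
  have C: "C \<in> carrier_mat N (s*d)" unfolding C_def by simp
  have MsB: "Ms ! i * B \<in> carrier_mat N d" if "i < s" for i using Ms B that unfolding s_def by auto
  have idx: "c div d < s" "c mod d < d" if "c < s * d" for c
  proof -
    have "0 < d" using that by (cases d) auto
    then show "c mod d < d" by simp
    show "c div d < s" using that by (simp add: less_mult_imp_div_less)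
  qed
  have colC: "col C c = col (Ms ! (c div d) * B) (c mod d)" if c: "c < s * d" for c
  proof -
    have Mi: "Ms ! (c div d) \<in> carrier_mat N N" using Ms idx[OF c] unfolding s_def by auto
    show ?thesis using c idx[OF c] MsB[OF idx(1)[OF c]] Mi unfolding C_def by (intro eq_vecI) auto
  qed
  have colMB: "col (Ms ! i * B) j = Ms ! i *\<^sub>v bs ! j" if "i < s" "j < d" for i j
  proof -
    have "col (Ms ! i * B) j = Ms ! i *\<^sub>v col B j"
      using that Ms B unfolding s_def by (intro col_mult2) auto
    moreover have "bs ! j \<in> carrier_vec N" using bsN that d by auto
    ultimately show ?thesis using that d unfolding B_def by simp
  qed
  define U where "U = (\<Union>i<length Ms. (\<lambda>v. (Ms ! i) *\<^sub>v v) ` V)"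
  have IS: "image_sum N Ms V = VS.span U" unfolding image_sum_def cspan_def U_def by simp
  have colsC: "set (cols C) \<subseteq> carrier_vec N" using C by (auto simp: cols_def)
  have VN: "V \<subseteq> carrier_vec N"
  proof
    fix v assume "v \<in> V"
    then have "v \<in> VS.span (set bs)" using Vsp unfolding cspan_def by auto
    then show "v \<in> carrier_vec N" using VS.span_closed bsN by auto
  qed
  have UN: "U \<subseteq> carrier_vec N" unfolding U_def
  proof (intro UN_least image_subsetI)
    fix i v assume "i \<in> {..<length Ms}" "v \<in> V"
    then show "Ms ! i *\<^sub>v v \<in> carrier_vec N" using VN Ms by (metis lessThan_iff mult_mat_vec_carrier subsetD)
  qed
  have sub1: "set (cols C) \<subseteq> U"
  proof
    fix y assume "y \<in> set (cols C)"
    then obtain c where c: "c < s * d" and y: "y = col C c" using C by (auto simp: cols_def)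
    have "y = Ms ! (c div d) *\<^sub>v bs ! (c mod d)" using y colC[OF c] colMB idx[OF c] by simp
    moreover have "bs ! (c mod d) \<in> V" using bsV d idx[OF c] by auto
    ultimately show "y \<in> U" unfolding U_def s_def using idx[OF c] unfolding s_def by auto
  qed
  have sub2: "U \<subseteq> VS.span (set (cols C))"
  proof
    fix y assume "y \<in> U"
    then obtain i v where i: "i < s" and v: "v \<in> V" and y: "y = Ms ! i *\<^sub>v v"
      unfolding U_def s_def by auto
    have "v \<in> VS.span (set (cols B))" using v Vsp d bsN unfolding cspan_def B_def by (auto simp: cols_mat_of_cols)
    then have "v \<in> VS.col_space B" unfolding VS.col_space_def .
    then obtain x where x: "x \<in> carrier_vec d" and Bx: "B *\<^sub>v x = v"
      using VS.col_space_eq[OF B] B by auto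
    have Mi: "Ms ! i \<in> carrier_mat N N" using Ms i unfolding s_def by auto
    have yeq: "y = (Ms ! i * B) *\<^sub>v x" using y Bx assoc_mult_mat_vec[OF Mi B x] by simp
    have dr: "dim_row (Ms ! i * B) = N" "dim_col (Ms ! i * B) = d" using MsB[OF i] by auto
    have yN: "y \<in> carrier_vec N" using yeq MsB[OF i] x by (metis mult_mat_vec_carrier)
    have "y \<in> VS.col_space (Ms ! i * B)"
      unfolding VS.col_space_eq[OF MsB[OF i]] dr using x yN yeq by blast
    then have yin: "y \<in> VS.span (set (cols (Ms ! i * B)))" unfolding VS.col_space_def .
    have "set (cols (Ms ! i * B)) \<subseteq> set (cols C)"
    proof
      fix z assume "z \<in> set (cols (Ms ! i * B))"
      then obtain j where j: "j < d" and z: "z = col (Ms ! i * B) j"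
        using MsB[OF i] by (auto simp: cols_def)
      have c: "i * d + j < s * d" using i j
        by (metis add.commute add_mult_distrib less_le_trans mult_le_mono1 nat_add_left_cancel_less Suc_leI mult_Suc)
      have "(i * d + j) div d = i" "(i * d + j) mod d = j" using j by auto
      then have "z = col C (i * d + j)" using z colC[OF c] by simp
      then show "z \<in> set (cols C)" using c C by (auto simp: cols_def)
    qed
    then show "y \<in> VS.span (set (cols C))" using yin VS.span_is_monotone by blast
  qed
  have spanEq: "VS.span (set (cols C)) = image_sum N Ms V"
  proof
    show "VS.span (set (cols C)) \<subseteq> image_sum N Ms V" unfolding IS using VS.span_is_monotone[OF sub1] .
    show "image_sum N Ms V \<subseteq> VS.span (set (cols C))" unfolding IS using VS.span_subsetI[OF colsC sub2] .
  qed
  have rank: "VS.rank C = s * d"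
    unfolding VS.rank_def spanEq using dimV unfolding cdim_def s_def by simp
  have dist: "distinct (cols C)" using VS.rank_full_distinct[OF C rank] .
  have li: "VS.lin_indpt (set (cols C))" using VS.full_rank_lin_indpt[OF C rank dist] .
  have "\<forall>v \<in> carrier_vec (s*d). C *\<^sub>v v = 0\<^sub>v N \<longrightarrow> v = 0\<^sub>v (s*d)"
    using VS.lin_depI[OF C _ _ _ dist] li by blast
  moreover have "s * d \<le> N"
  proof -
    have "card (set (cols C)) \<le> N" using VS.li_le_dim(2)[OF VS.fin_dim colsC li] VS.dim_is_n by simp
    moreover have "card (set (cols C)) = s * d" using distinct_card[OF dist] C by simp
    ultimately show ?thesis by simp
  qed
  ultimately show ?thesis unfolding C_def B_def s_def by blast
qed

lemma sum_blocks:
  fixes f :: "nat \<Rightarrow> 'a::comm_monoid_add"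
  shows "(\<Sum>c<s*m. f c) = (\<Sum>i<s. \<Sum>k<m. f (i*m+k))"
proof -
  have "(\<Sum>c<s*m. f c) = (\<Sum>i<s. sum f {i*m..<i*m+m})" by (simp add: sum.nat_group)
  also have "\<dots> = (\<Sum>i<s. \<Sum>k<m. f (i*m+k))"
  proof (rule sum.cong[OF refl])
    fix i assume "i \<in> {..<s}"
    have "sum f {0 + i*m..<m + i*m} = (\<Sum>k = 0..<m. f (k + i*m))"
      by (rule sum.shift_bounds_nat_ivl)
    then show "sum f {i*m..<i*m+m} = (\<Sum>k<m. f (i*m+k))"
      by (simp add: add.commute atLeast0LessThan)
  qed
  finally show ?thesis .
qed

lemma block_mult:
  fixes Y :: "nat \<Rightarrow> complex mat"
  assumes Y: "\<And>i. i < s \<Longrightarrow> Y i \<in> carrier_mat N m" and v: "v \<in> carrier_vec (s*m)"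
  shows "mat N (s*m) (\<lambda>(r,c). Y (c div m) $$ (r, c mod m)) *\<^sub>v v
       = vec N (\<lambda>r. \<Sum>i<s. (Y i *\<^sub>v vec m (\<lambda>k. v $ (i*m+k))) $ r)"
proof (rule eq_vecI)
  fix r assume "r < dim_vec (vec N (\<lambda>r. \<Sum>i<s. (Y i *\<^sub>v vec m (\<lambda>k. v $ (i*m+k))) $ r))"
  then have r: "r < N" by simp
  have "(mat N (s*m) (\<lambda>(r,c). Y (c div m) $$ (r, c mod m)) *\<^sub>v v) $ r
      = (\<Sum>c<s*m. Y (c div m) $$ (r, c mod m) * v $ c)"
    using r v by (simp add: mult_mat_vec_def scalar_prod_def atLeast0LessThan)
  also have "\<dots> = (\<Sum>i<s. \<Sum>k<m. Y ((i*m+k) div m) $$ (r, (i*m+k) mod m) * v $ (i*m+k))"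
    by (rule sum_blocks)
  also have "\<dots> = (\<Sum>i<s. \<Sum>k<m. Y i $$ (r, k) * v $ (i*m+k))"
    by (intro sum.cong refl) auto
  also have "\<dots> = (\<Sum>i<s. (Y i *\<^sub>v vec m (\<lambda>k. v $ (i*m+k))) $ r)"
  proof (rule sum.cong[OF refl])
    fix i assume "i \<in> {..<s}"
    then have Yi: "Y i \<in> carrier_mat N m" using Y by simp
    show "(\<Sum>k<m. Y i $$ (r, k) * v $ (i*m+k)) = (Y i *\<^sub>v vec m (\<lambda>k. v $ (i*m+k))) $ r"
      using Yi r by (simp add: mult_mat_vec_def scalar_prod_def atLeast0LessThan)
  qed
  finally show "(mat N (s*m) (\<lambda>(r,c). Y (c div m) $$ (r, c mod m)) *\<^sub>v v) $ r
      = vec N (\<lambda>r. \<Sum>i<s. (Y i *\<^sub>v vec m (\<lambda>k. v $ (i*m+k))) $ r) $ r" using r by simp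
qed simp

lemma det_inverse:
  fixes A :: "complex mat"
  assumes A: "A \<in> carrier_mat n n" and d: "det A \<noteq> 0"
  shows "\<exists>B \<in> carrier_mat n n. A * B = 1\<^sub>m n \<and> B * A = 1\<^sub>m n"
proof -
  have "A \<in> Units (ring_mat TYPE(complex) n ())" using det_non_zero_imp_unit[OF A d] .
  then show ?thesis unfolding Units_def by (auto simp: ring_mat_simps)
qed

lemma left_inverse:
  fixes C :: "complex mat"
  assumes C: "C \<in> carrier_mat n k" and ker: "\<forall>v \<in> carrier_vec k. C *\<^sub>v v = 0\<^sub>v n \<longrightarrow> v = 0\<^sub>v k"
  shows "\<exists>X \<in> carrier_mat k n. X * C = 1\<^sub>m k"
proof -
  define Ch where "Ch = mat k n (\<lambda>(a,j). cnj (C $$ (j,a)))"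
  have Ch: "Ch \<in> carrier_mat k n" unfolding Ch_def by simp
  define H where "H = Ch * C"
  have H: "H \<in> carrier_mat k k" unfolding H_def using Ch C by simp
  have "det H \<noteq> 0"
  proof
    assume "det H = 0"
    then obtain v where v: "v \<in> carrier_vec k" "v \<noteq> 0\<^sub>v k" "H *\<^sub>v v = 0\<^sub>v k"
      using det_0_iff_vec_prod_zero[OF H] by blast
    define w where "w = C *\<^sub>v v"
    have w: "w \<in> carrier_vec n" unfolding w_def using C v by simp
    have Hv: "H *\<^sub>v v = Ch *\<^sub>v w" unfolding H_def w_def using Ch C v by (simp add: assoc_mult_mat_vec)
    have "(\<Sum>a<k. cnj (v $ a) * (Ch *\<^sub>v w) $ a) = 0" using v(3) Hv by simp
    moreover have "(\<Sum>a<k. cnj (v $ a) * (Ch *\<^sub>v w) $ a) = (\<Sum>a<k. \<Sum>j<n. cnj (v $ a) * cnj (C $$ (j,a)) * w $ j)"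
      using Ch w by (simp add: mult_mat_vec_def scalar_prod_def Ch_def sum_distrib_left atLeast0LessThan mult.assoc)
    moreover have "\<dots> = (\<Sum>j<n. w $ j * cnj (\<Sum>a<k. C $$ (j,a) * v $ a))"
      by (subst sum.swap) (simp add: cnj_sum sum_distrib_left mult.commute mult.left_commute)
    moreover have "\<dots> = (\<Sum>j<n. w $ j * cnj (w $ j))"
      using C v by (intro sum.cong refl) (simp add: w_def mult_mat_vec_def scalar_prod_def atLeast0LessThan)
    moreover have "\<dots> = w \<bullet>c w"
      using w by (simp add: scalar_prod_def atLeast0LessThan)
    ultimately have "w \<bullet>c w = 0" by simp
    then have "w = 0\<^sub>v n" using w by simp
    then show False using ker v unfolding w_def by auto
  qed
  then obtain Hi where Hi: "Hi \<in> carrier_mat k k" "Hi * H = 1\<^sub>m k" using det_inverse[OF H] by blast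
  have "(Hi * Ch) * C = Hi * (Ch * C)" using Hi Ch C by (simp add: assoc_mult_mat)
  then have "(Hi * Ch) * C = 1\<^sub>m k" using Hi unfolding H_def by simp
  moreover have "Hi * Ch \<in> carrier_mat k n" using Hi Ch by simp
  ultimately show ?thesis by blast
qed

lemma kernel_transfer:
  fixes Ms :: "complex mat list" and B P :: "complex mat"
  assumes Ms: "\<forall>i<length Ms. Ms ! i \<in> carrier_mat N N"
    and B: "B \<in> carrier_mat N d" and P: "P \<in> carrier_mat d l"
    and kerC: "\<forall>v \<in> carrier_vec (length Ms * d).
       mat N (length Ms * d) (\<lambda>(r,c). (Ms ! (c div d) * B) $$ (r, c mod d)) *\<^sub>v v = 0\<^sub>v N
       \<longrightarrow> v = 0\<^sub>v (length Ms * d)"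
    and kerP: "\<forall>v \<in> carrier_vec l. P *\<^sub>v v = 0\<^sub>v d \<longrightarrow> v = 0\<^sub>v l"
  shows "\<forall>v \<in> carrier_vec (length Ms * l).
       mat N (length Ms * l) (\<lambda>(r,c). (Ms ! (c div l) * (B * P)) $$ (r, c mod l)) *\<^sub>v v = 0\<^sub>v N
       \<longrightarrow> v = 0\<^sub>v (length Ms * l)"
proof (intro ballI impI)
  define s where "s = length Ms"
  fix v :: "complex vec"
  assume v: "v \<in> carrier_vec (length Ms * l)"
    and Cv: "mat N (length Ms * l) (\<lambda>(r,c). (Ms ! (c div l) * (B * P)) $$ (r, c mod l)) *\<^sub>v v = 0\<^sub>v N"
  define vi where "vi i = vec l (\<lambda>k. v $ (i*l+k))" for i
  have vi: "vi i \<in> carrier_vec l" for i unfolding vi_def by simp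
  define u where "u = vec (s*d) (\<lambda>c. (P *\<^sub>v vi (c div d)) $ (c mod d))"
  have u: "u \<in> carrier_vec (s*d)" unfolding u_def by simp
  have ub: "vec d (\<lambda>k. u $ (i*d+k)) = P *\<^sub>v vi i" if i: "i < s" for i
  proof (rule eq_vecI)
    fix k assume "k < dim_vec (P *\<^sub>v vi i)"
    then have k: "k < d" using P by simp
    have "i*d+k < s*d" using i k
      by (metis add.commute add_mult_distrib less_le_trans mult_le_mono1 nat_add_left_cancel_less Suc_leI mult_Suc)
    then show "vec d (\<lambda>k. u $ (i*d+k)) $ k = (P *\<^sub>v vi i) $ k" using k unfolding u_def by simp
  qed (use P in simp)
  have Mi: "Ms ! i \<in> carrier_mat N N" if "i < s" for i using Ms that unfolding s_def by simp
  have eqY: "(Ms ! i * (B * P)) *\<^sub>v vi i = (Ms ! i * B) *\<^sub>v (P *\<^sub>v vi i)" if i: "i < s" for i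
  proof -
    have eq: "Ms ! i * (B * P) = (Ms ! i * B) * P" using Mi[OF i] B P by (simp add: assoc_mult_mat)
    have MB: "Ms ! i * B \<in> carrier_mat N d" using Mi[OF i] B by simp
    show ?thesis unfolding eq using assoc_mult_mat_vec[OF MB P vi] .
  qed
  have "mat N (s*d) (\<lambda>(r,c). (Ms ! (c div d) * B) $$ (r, c mod d)) *\<^sub>v u
      = vec N (\<lambda>r. \<Sum>i<s. ((Ms ! i * B) *\<^sub>v vec d (\<lambda>k. u $ (i*d+k))) $ r)"
    using Mi B u by (intro block_mult) (auto intro: mult_carrier_mat)
  also have "\<dots> = vec N (\<lambda>r. \<Sum>i<s. ((Ms ! i * (B * P)) *\<^sub>v vi i) $ r)"
    using ub eqY by (intro arg_cong[where f="vec N"] ext sum.cong refl) auto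
  also have "\<dots> = mat N (s*l) (\<lambda>(r,c). (Ms ! (c div l) * (B * P)) $$ (r, c mod l)) *\<^sub>v v"
    unfolding vi_def using Mi B P v unfolding s_def by (intro block_mult[symmetric]) (auto intro!: mult_carrier_mat)
  also have "\<dots> = 0\<^sub>v N" using Cv unfolding s_def .
  finally have "u = 0\<^sub>v (s*d)" using kerC u unfolding s_def by blast
  note u0 = this
  have Pvi: "P *\<^sub>v vi i = 0\<^sub>v d" if i: "i < s" for i
  proof -
    have "P *\<^sub>v vi i = vec d (\<lambda>k. u $ (i*d+k))" using ub[OF i] by simp
    also have "\<dots> = 0\<^sub>v d"
    proof (rule eq_vecI)
      fix k assume "k < dim_vec (0\<^sub>v d :: complex vec)"
      then have k: "k < d" by simp
      have "i*d+k < s*d" using i k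
        by (metis add.commute add_mult_distrib less_le_trans mult_le_mono1 nat_add_left_cancel_less Suc_leI mult_Suc)
      then show "vec d (\<lambda>k. u $ (i*d+k)) $ k = 0\<^sub>v d $ k" using k u0 by simp
    qed simp
    finally show ?thesis .
  qed
  show "v = 0\<^sub>v (length Ms * l)"
  proof (rule eq_vecI)
    fix c assume "c < dim_vec (0\<^sub>v (length Ms * l) :: complex vec)"
    then have c: "c < s * l" unfolding s_def by simp
    then have l0: "0 < l" by (cases l) auto
    have cd: "c div l < s" using c by (simp add: less_mult_imp_div_less)
    have "vi (c div l) = 0\<^sub>v l" using kerP vi Pvi[OF cd] by blast
    then have "vi (c div l) $ (c mod l) = 0" using l0 by simp
    moreover have "vi (c div l) $ (c mod l) = v $ c" unfolding vi_def using l0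
      by (simp add: mult.commute)
    ultimately show "v $ c = 0\<^sub>v (length Ms * l) $ c" using c unfolding s_def by simp
  qed (use v in simp)
qed

lemma polyfun_tendsto:
  assumes "f \<in> polyfun coord vars" "\<forall>v\<in>vars. ((\<lambda>t. coord (Y t) v) \<longlongrightarrow> coord Z v) F"
  shows "((\<lambda>t. f (Y t)) \<longlongrightarrow> f Z) F"
  using assms by (induction rule: polyfun.induct) (auto intro!: tendsto_intros)

lemma closure_by_limit:
  assumes Z: "Z \<in> X" and lim: "\<forall>v\<in>vars. ((\<lambda>t. coord (Y t) v) \<longlongrightarrow> coord Z v) F"
    and F: "F \<noteq> bot" and ev: "eventually (\<lambda>t. Y t \<in> S) F"
  shows "Z \<in> zariski_closure coord vars X S"
  unfolding zariski_closure_def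
proof (intro CollectI conjI ballI impI)
  show "Z \<in> X" using Z .
  fix f assume f: "f \<in> polyfun coord vars" and van: "\<forall>y\<in>S. f y = 0"
  have l1: "((\<lambda>t. f (Y t)) \<longlongrightarrow> f Z) F" using polyfun_tendsto[OF f lim] .
  have "eventually (\<lambda>t. f (Y t) = 0) F" using ev van by (auto elim: eventually_mono)
  then have l2: "((\<lambda>t. f (Y t)) \<longlongrightarrow> 0) F" by (rule tendsto_eventually)
  show "f Z = 0" using tendsto_unique[OF F l1 l2] .
qed

lemma eventually_not_in_finite:
  fixes S :: "complex set"
  assumes "finite S"
  shows "eventually (\<lambda>t. t \<notin> S) (at 0)"
proof -
  have "open (- (S - {0}))" using assms by (intro open_Compl finite_imp_closed) auto
  moreover have "0 \<in> - (S - {0})" by simp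
  ultimately have "eventually (\<lambda>t. t \<in> - (S - {0})) (nhds 0)" by (rule eventually_nhds_in_open)
  then have "eventually (\<lambda>t. t \<noteq> 0 \<longrightarrow> t \<in> - (S - {0})) (nhds 0)" by (auto elim: eventually_mono)
  then have "eventually (\<lambda>t. t \<in> - (S - {0})) (at 0)" unfolding eventually_at_filter by simp
  moreover have "eventually (\<lambda>t. t \<noteq> 0) (at (0::complex))" by (simp add: eventually_at_filter)
  ultimately show ?thesis by eventually_elim auto
qed

lemma finite_cube_preimage:
  fixes S :: "complex set"
  assumes "finite S"
  shows "finite {t. - (t^3) \<in> S}"
proof -
  have sub: "{t. - (t^3) \<in> S} \<subseteq> (\<Union>c\<in>S. {t. poly [:c, 0, 0, 1:] t = 0})"
    by (auto simp: algebra_simps power3_eq_cube)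
  moreover have "finite {t. poly [:c, 0, 0, 1:] t = (0::complex)}" for c
    by (intro poly_roots_finite) simp
  then have "finite (\<Union>c\<in>S. {t. poly [:c, 0, 0, 1:] t = (0::complex)})" using assms by simp
  then show ?thesis using sub finite_subset by blast
qed

lemma congr_entry2:
  fixes R Mi :: "complex mat"
  assumes R: "R \<in> carrier_mat N N" and Mi: "Mi \<in> carrier_mat N N" and j: "j < N" and k: "k < N"
  shows "(R * Mi * transpose_mat R) $$ (j,k) = row R j \<bullet> (Mi *\<^sub>v row R k)"
proof -
  have "R * Mi * transpose_mat R = R * (Mi * transpose_mat R)"
    using R Mi by (intro assoc_mult_mat) auto
  also have "\<dots> $$ (j,k) = row R j \<bullet> col (Mi * transpose_mat R) k"
    using R Mi j k by (intro index_mult_mat) auto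
  also have "col (Mi * transpose_mat R) k = Mi *\<^sub>v col (transpose_mat R) k"
    using R Mi k by (intro col_mult2) auto
  also have "col (transpose_mat R) k = row R k" using R k by simp
  finally show ?thesis .
qed

lemma bil_expand:
  fixes Mi :: "complex mat"
  assumes Mi: "Mi \<in> carrier_mat N N" and x: "x \<in> carrier_vec N" and y: "y \<in> carrier_vec N"
    and u: "u \<in> carrier_vec N" and w: "w \<in> carrier_vec N"
  shows "(a \<cdot>\<^sub>v (x + c \<cdot>\<^sub>v u)) \<bullet> (Mi *\<^sub>v (b \<cdot>\<^sub>v (y + c \<cdot>\<^sub>v w)))
    = a * b * (x \<bullet> (Mi *\<^sub>v y) + c * (x \<bullet> (Mi *\<^sub>v w)) + c * (u \<bullet> (Mi *\<^sub>v y)) + c * c * (u \<bullet> (Mi *\<^sub>v w)))"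
proof -
  have My: "Mi *\<^sub>v y \<in> carrier_vec N" and Mw: "Mi *\<^sub>v w \<in> carrier_vec N" using Mi y w by auto
  have "Mi *\<^sub>v (b \<cdot>\<^sub>v (y + c \<cdot>\<^sub>v w)) = b \<cdot>\<^sub>v (Mi *\<^sub>v y + c \<cdot>\<^sub>v (Mi *\<^sub>v w))"
    using Mi y w by (simp add: mult_mat_vec mult_add_distrib_mat_vec)
  then have "(a \<cdot>\<^sub>v (x + c \<cdot>\<^sub>v u)) \<bullet> (Mi *\<^sub>v (b \<cdot>\<^sub>v (y + c \<cdot>\<^sub>v w)))
      = (a \<cdot>\<^sub>v (x + c \<cdot>\<^sub>v u)) \<bullet> (b \<cdot>\<^sub>v (Mi *\<^sub>v y + c \<cdot>\<^sub>v (Mi *\<^sub>v w)))" by simp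
  also have "\<dots> = a * b * ((x + c \<cdot>\<^sub>v u) \<bullet> (Mi *\<^sub>v y + c \<cdot>\<^sub>v (Mi *\<^sub>v w)))"
  proof -
    have X: "x + c \<cdot>\<^sub>v u \<in> carrier_vec N" using x u by simp
    have Y: "Mi *\<^sub>v y + c \<cdot>\<^sub>v (Mi *\<^sub>v w) \<in> carrier_vec N" using My Mw by simp
    have bY: "b \<cdot>\<^sub>v (Mi *\<^sub>v y + c \<cdot>\<^sub>v (Mi *\<^sub>v w)) \<in> carrier_vec N" using Y by simp
    show ?thesis using smult_scalar_prod_distrib[OF X bY, of a] scalar_prod_smult_distrib[OF X Y, of b] by simp
  qed
  also have "(x + c \<cdot>\<^sub>v u) \<bullet> (Mi *\<^sub>v y + c \<cdot>\<^sub>v (Mi *\<^sub>v w))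
      = x \<bullet> (Mi *\<^sub>v y) + c * (x \<bullet> (Mi *\<^sub>v w)) + c * (u \<bullet> (Mi *\<^sub>v y)) + c * c * (u \<bullet> (Mi *\<^sub>v w))"
    using x u My Mw by (simp add: add_scalar_prod_distrib scalar_prod_add_distrib
        smult_scalar_prod_distrib scalar_prod_smult_distrib algebra_simps)
  finally show ?thesis .
qed

lemma bil_neg:
  fixes F :: "complex mat"
  assumes F: "F \<in> carrier_mat n n" and x: "x \<in> carrier_vec n" and y: "y \<in> carrier_vec n"
  shows "x \<bullet> ((- F) *\<^sub>v y) = - (x \<bullet> (F *\<^sub>v y))"
proof -
  have "(- F) *\<^sub>v y = - (F *\<^sub>v y)"
    using F y by (intro eq_vecI) (auto simp: mult_mat_vec_def scalar_prod_def sum_negf)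
  then show ?thesis using F x y by (simp add: scalar_prod_uminus_right)
qed

theorem corollary3p8:
  fixes p q l N :: nat and M :: "complex mat list" and V :: "complex vec set"
  assumes M: "M \<in> sym_alt_tuples p q N"
    and V: "csubspace N V" "cdim N V = 2 ^ (p + q) * l"
    and MV: "cdim N (image_sum N M V) = (p + q) * 2 ^ (p + q) * l"
  shows "\<exists>M' \<in> zariski_closure tuple_coord (tuple_vars (p + q) N) (tuple_space (p + q) N)
                 (congr_orbit N M).
           M' \<in> sym_alt_tuples p q N \<and>
           (\<forall>i < p + q.
              (\<forall>j k. l \<le> j \<and> j < N \<and> l \<le> k \<and> k < N \<longrightarrow> M' ! i $$ (j, k) = 0) \<and>
              (\<forall>j k. j < N \<and> k < l \<longrightarrow>
                 M' ! i $$ (j, k) = (if j = (i + 1) * l + k then 1 else 0)))"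
proof -
  define s where "s = p + q"
  define d where "d = 2 ^ s * l"
  have lenM: "length M = s" and Mc: "\<And>i. i < s \<Longrightarrow> M ! i \<in> carrier_mat N N"
    and Msym: "\<And>i. i < p \<Longrightarrow> transpose_mat (M ! i) = M ! i"
    and Mskew: "\<And>i. p \<le> i \<Longrightarrow> i < s \<Longrightarrow> transpose_mat (M ! i) = - (M ! i)"
    using M unfolding sym_alt_tuples_def tuple_space_def s_def by auto
  have Mss: "symskew (M ! i)" if "i < s" for i
    using Msym Mskew that unfolding symskew_def by (cases "i < p") auto
  obtain bs where bsV: "set bs \<subseteq> V" and Vsp: "V \<subseteq> cspan N (set bs)" and lbs: "length bs = d"
    using subspace_basis[OF V(1)] V(2) unfolding d_def s_def by auto
  have VN: "V \<subseteq> carrier_vec N"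
    using V(1) unfolding csubspace_def VectorSpace.subspace_def submodule_def by (auto simp: module_vec_simps)
  have bsN: "set bs \<subseteq> carrier_vec N" using bsV VN by auto
  have Mall: "\<forall>i<length M. M ! i \<in> carrier_mat N N" using Mc lenM by simp
  have dimV: "cdim N (image_sum N M V) = length M * d" using MV lenM unfolding d_def s_def by simp
  from block_mat_kernel[OF Mall bsV Vsp bsN lbs dimV]
  have kerC: "\<forall>v \<in> carrier_vec (length M * d).
           mat N (length M * d) (\<lambda>(r,c). (M ! (c div d) * mat_of_cols N bs) $$ (r, c mod d)) *\<^sub>v v = 0\<^sub>v N
           \<longrightarrow> v = 0\<^sub>v (length M * d)" and sdN: "s * d \<le> N" using lenM by auto
  define B where "B = mat_of_cols N bs"
  have B: "B \<in> carrier_mat N d" unfolding B_def using lbs mat_of_cols_carrier(1)[of N bs] by simp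
  define Fs where "Fs = map (\<lambda>A. transpose_mat B * A * B) M"
  have Fs: "\<forall>F\<in>set Fs. F \<in> carrier_mat d d \<and> symskew F"
  proof
    fix F assume "F \<in> set Fs"
    then obtain i where i: "i < s" and F: "F = transpose_mat B * M ! i * B"
      unfolding Fs_def using lenM by (auto simp: in_set_conv_nth)
    show "F \<in> carrier_mat d d \<and> symskew F"
      unfolding F using B Mc[OF i] symskew_congr[OF Mc[OF i] B Mss[OF i]] by simp
  qed
  have dFs: "d = 2 ^ length Fs * l" unfolding Fs_def d_def using lenM by simp
  obtain P where P: "P \<in> carrier_mat d l"
    and kerP: "\<forall>v \<in> carrier_vec l. P *\<^sub>v v = 0\<^sub>v d \<longrightarrow> v = 0\<^sub>v l"
    and isoP: "\<forall>F \<in> set Fs. transpose_mat P * F * P = 0\<^sub>m l l"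
    using iso_multi[OF Fs dFs] by blast
  define W where "W = B * P"
  have W: "W \<in> carrier_mat N l" unfolding W_def using B P by simp
  have isoW: "transpose_mat W * M ! i * W = 0\<^sub>m l l" if i: "i < s" for i
  proof -
    have "transpose_mat W * M ! i * W = transpose_mat P * (transpose_mat B * M ! i * B) * P"
      unfolding W_def using congr_comp[OF B P Mc[OF i]] .
    moreover have "transpose_mat B * M ! i * B \<in> set Fs" unfolding Fs_def using i lenM by simp
    ultimately show ?thesis using isoP by simp
  qed
  have kerC': "\<forall>v \<in> carrier_vec (length M * l).
       mat N (length M * l) (\<lambda>(r,c). (M ! (c div l) * (B * P)) $$ (r, c mod l)) *\<^sub>v v = 0\<^sub>v N
       \<longrightarrow> v = 0\<^sub>v (length M * l)"
    using kernel_transfer[OF Mall B P _ kerP] kerC unfolding B_def by blast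
  define C' where "C' = mat N (s*l) (\<lambda>(r,c). (M ! (c div l) * W) $$ (r, c mod l))"
  have C': "C' \<in> carrier_mat N (s*l)" unfolding C'_def by simp
  obtain X where X: "X \<in> carrier_mat (s*l) N" and XC: "X * C' = 1\<^sub>m (s*l)"
    using left_inverse[OF C'] kerC' unfolding C'_def W_def lenM by blast
  define A where "A = mat N N (\<lambda>(j,c). if j < l then W $$ (c,j) else if j - l < s*l then X $$ (j-l, c) else 0)"
  have A: "A \<in> carrier_mat N N" unfolding A_def by simp
  have rowA1: "row A j = col W j" if "j < N" "j < l" for j
    using that W unfolding A_def by (intro eq_vecI) auto
  have rowA2: "row A j = row X (j - l)" if "j < N" "l \<le> j" "j - l < s*l" for j
    using that X unfolding A_def by (intro eq_vecI) auto
  have rowA3: "row A j = 0\<^sub>v N" if "j < N" "l \<le> j" "\<not> j - l < s*l" for j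
    using that unfolding A_def by (intro eq_vecI) auto
  have rowAc: "row A j \<in> carrier_vec N" for j using A row_carrier[of A j] by (metis carrier_matD(2))
  have isoA: "row A j \<bullet> (M ! i *\<^sub>v row A k) = 0" if "i < s" "j < l" "k < l" "j < N" "k < N" for i j k
  proof -
    have "row A j \<bullet> (M ! i *\<^sub>v row A k) = col W j \<bullet> (M ! i *\<^sub>v col W k)" using rowA1 that by simp
    also have "\<dots> = (transpose_mat W * M ! i * W) $$ (j,k)" using congr_entry[OF W Mc[OF that(1)]] that by simp
    also have "\<dots> = 0" using isoW[OF that(1)] that by simp
    finally show ?thesis .
  qed
  have colC': "col C' (i*l+k) = M ! i *\<^sub>v col W k" if i: "i < s" and k: "k < l" for i k
  proof -
    have c: "i*l+k < s*l" using i k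
      by (metis add.commute add_mult_distrib less_le_trans mult_le_mono1 nat_add_left_cancel_less Suc_leI mult_Suc)
    have "col C' (i*l+k) = col (M ! i * W) k"
      using c k Mc[OF i] W unfolding C'_def by (intro eq_vecI) auto
    also have "\<dots> = M ! i *\<^sub>v col W k" using Mc[OF i] W k by (intro col_mult2) auto
    finally show ?thesis .
  qed
  have deltaA: "row A j \<bullet> (M ! i *\<^sub>v row A k) = (if j = (i + 1) * l + k then 1 else 0)"
    if i: "i < s" and j: "j < N" "l \<le> j" and k: "k < l" "k < N" for i j k
  proof (cases "j - l < s*l")
    case True
    have c: "i*l+k < s*l" using i k
      by (metis add.commute add_mult_distrib less_le_trans mult_le_mono1 nat_add_left_cancel_less Suc_leI mult_Suc)
    have "row A j \<bullet> (M ! i *\<^sub>v row A k) = row X (j - l) \<bullet> col C' (i*l+k)"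
      using rowA2[OF j True] rowA1[OF k(2) k(1)] colC'[OF i k(1)] by simp
    also have "\<dots> = (X * C') $$ (j - l, i*l+k)" using X C' True c by simp
    also have "\<dots> = (if j - l = i*l+k then 1 else 0)" using XC True c by simp
    also have "(j - l = i*l+k) = (j = (i+1)*l+k)" using j by auto
    finally show ?thesis .
  next
    case False
    have "(i+1)*l+k = l + (i*l+k)" by simp
    moreover have "i*l+k < s*l" using i k
      by (metis add.commute add_mult_distrib less_le_trans mult_le_mono1 nat_add_left_cancel_less Suc_leI mult_Suc)
    ultimately have "j \<noteq> (i+1)*l+k" using False j by auto
    moreover have "M ! i *\<^sub>v row A k \<in> carrier_vec N" using Mc[OF i] rowAc by simp
    ultimately show ?thesis using rowA3[OF j False] by simp
  qed
  have symA: "row A k \<bullet> (M ! i *\<^sub>v row A j) = (if i < p then 1 else -1) * (row A j \<bullet> (M ! i *\<^sub>v row A k))"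
    if i: "i < s" for i j k
  proof -
    have "row A k \<bullet> (M ! i *\<^sub>v row A j) = row A j \<bullet> (transpose_mat (M ! i) *\<^sub>v row A k)"
      using bil_transpose[OF Mc[OF i] rowAc rowAc] .
    then show ?thesis using Msym Mskew i Mc[OF i] rowAc[of j] rowAc[of k]
      by (cases "i < p") (auto simp: bil_neg)
  qed
  define M' where "M' = map (\<lambda>i. mat N N (\<lambda>(j,k). if (j < l) = (k < l) then 0
      else row A j \<bullet> (M ! i *\<^sub>v row A k))) [0..<s]"
  have lenM': "length M' = s" unfolding M'_def by simp
  have M'i: "M' ! i $$ (j,k) = (if (j < l) = (k < l) then 0 else row A j \<bullet> (M ! i *\<^sub>v row A k))"
    if "i < s" "j < N" "k < N" for i j k
    using that unfolding M'_def by simp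
  have M'c: "M' ! i \<in> carrier_mat N N" if "i < s" for i using that unfolding M'_def by simp
  have M'T: "M' \<in> tuple_space s N" unfolding tuple_space_def using lenM' M'c by simp
  have M'sym: "M' \<in> sym_alt_tuples p q N"
    unfolding sym_alt_tuples_def s_def[symmetric]
  proof (intro CollectI conjI allI impI)
    show "M' \<in> tuple_space s N" using M'T .
    fix i assume i: "i < p"
    then have iS: "i < s" unfolding s_def by simp
    show "transpose_mat (M' ! i) = M' ! i"
    proof (rule eq_matI)
      fix j k assume "j < dim_row (M' ! i)" "k < dim_col (M' ! i)"
      then have j: "j < N" and k: "k < N" using M'c[OF iS] by auto
      show "transpose_mat (M' ! i) $$ (j,k) = M' ! i $$ (j,k)"
        using M'i[OF iS j k] M'i[OF iS k j] symA[OF iS, of j k] i j k M'c[OF iS] by auto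
    qed (use M'c[OF iS] in auto)
  next
    fix i assume i: "p \<le> i \<and> i < s"
    then have iS: "i < s" by simp
    show "transpose_mat (M' ! i) = - (M' ! i)"
    proof (rule eq_matI)
      fix j k assume "j < dim_row (- (M' ! i))" "k < dim_col (- (M' ! i))"
      then have j: "j < N" and k: "k < N" using M'c[OF iS] by auto
      show "transpose_mat (M' ! i) $$ (j,k) = (- (M' ! i)) $$ (j,k)"
        using M'i[OF iS j k] M'i[OF iS k j] symA[OF iS, of j k] i j k M'c[OF iS] by auto
    qed (use M'c[OF iS] in auto)
  qed
  have propA: "\<forall>j k. l \<le> j \<and> j < N \<and> l \<le> k \<and> k < N \<longrightarrow> M' ! i $$ (j, k) = 0" if i: "i < s" for i
    using M'i[OF i] by auto
  have propB: "\<forall>j k. j < N \<and> k < l \<longrightarrow> M' ! i $$ (j, k) = (if j = (i + 1) * l + k then 1 else 0)"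
    if i: "i < s" for i
  proof (intro allI impI)
    fix j k assume jk: "j < N \<and> k < l"
    have "l \<le> d" unfolding d_def by simp
    moreover have "d \<le> s * d" using i by simp
    ultimately have lN: "l \<le> N" using sdN by linarith
    then have k: "k < N" using jk by simp
    show "M' ! i $$ (j, k) = (if j = (i + 1) * l + k then 1 else 0)"
    proof (cases "j < l")
      case True
      then have "j \<noteq> (i+1)*l+k" by (simp add: add_mult_distrib)
      then show ?thesis using M'i[OF i _ k, of j] True jk by simp
    next
      case False
      then show ?thesis using M'i[OF i _ k, of j] deltaA[OF i _ _ _ k, of j] jk by simp
    qed
  qed
  define dg where "dg j t = (if j < l then 1/t else t)" for j :: nat and t :: complex
  define Q where "Q t = A + (t^3) \<cdot>\<^sub>m 1\<^sub>m N" for t :: complex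
  define g where "g t = mat N N (\<lambda>(j,c). dg j t * Q t $$ (j,c))" for t
  define Y where "Y t = map (\<lambda>A'. g t * A' * transpose_mat (g t)) M" for t
  have Q: "Q t \<in> carrier_mat N N" for t unfolding Q_def using A by simp
  have g: "g t \<in> carrier_mat N N" for t unfolding g_def by simp
  have Qent: "Q t $$ (j,c) = A $$ (j,c) + (if j = c then t^3 else 0)" if "j < N" "c < N" for t j c
    using that A unfolding Q_def by simp
  have rowg: "row (g t) j = dg j t \<cdot>\<^sub>v (row A j + t^3 \<cdot>\<^sub>v unit_vec N j)" if j: "j < N" for t j
  proof (rule eq_vecI)
    fix c assume "c < dim_vec (dg j t \<cdot>\<^sub>v (row A j + t^3 \<cdot>\<^sub>v unit_vec N j))"
    then have c: "c < N" by simp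
    show "row (g t) j $ c = (dg j t \<cdot>\<^sub>v (row A j + t^3 \<cdot>\<^sub>v unit_vec N j)) $ c"
      using j c A Qent[OF j c] unfolding g_def by auto
  qed (use g[of t] A in simp)
  define al where "al i j k = row A j \<bullet> (M ! i *\<^sub>v row A k)" for i j k
  define be where "be i j k = row A j \<bullet> (M ! i *\<^sub>v unit_vec N k)" for i j k
  define ga where "ga i j k = unit_vec N j \<bullet> (M ! i *\<^sub>v row A k)" for i j k
  define de where "de i j k = unit_vec N j \<bullet> (M ! i *\<^sub>v unit_vec N k)" for i j k
  have entry: "Y t ! i $$ (j,k) = dg j t * dg k t * (al i j k + t^3 * be i j k + t^3 * ga i j k + t^3 * t^3 * de i j k)"
    if i: "i < s" and j: "j < N" and k: "k < N" for t i j k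
  proof -
    have "Y t ! i $$ (j,k) = (g t * M ! i * transpose_mat (g t)) $$ (j,k)"
      unfolding Y_def using i lenM by simp
    also have "\<dots> = row (g t) j \<bullet> (M ! i *\<^sub>v row (g t) k)"
      using congr_entry2[OF g Mc[OF i] j k] .
    also have "\<dots> = (dg j t \<cdot>\<^sub>v (row A j + t^3 \<cdot>\<^sub>v unit_vec N j)) \<bullet> (M ! i *\<^sub>v (dg k t \<cdot>\<^sub>v (row A k + t^3 \<cdot>\<^sub>v unit_vec N k)))"
      using rowg[OF j] rowg[OF k] by simp
    also have "\<dots> = dg j t * dg k t * (al i j k + t^3 * be i j k + t^3 * ga i j k + t^3 * t^3 * de i j k)"
      unfolding al_def be_def ga_def de_def
      using bil_expand[OF Mc[OF i] rowAc rowAc unit_vec_carrier unit_vec_carrier] by simp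
    finally show ?thesis .
  qed
  define \<Phi> where "\<Phi> i j k t = (if j < l \<and> k < l then t * be i j k + t * ga i j k + t^4 * de i j k
      else if \<not> j < l \<and> \<not> k < l then t^2 * (al i j k + t^3 * be i j k + t^3 * ga i j k + t^3 * t^3 * de i j k)
      else al i j k + t^3 * be i j k + t^3 * ga i j k + t^3 * t^3 * de i j k)" for i j k and t :: complex
  have entry\<Phi>: "Y t ! i $$ (j,k) = \<Phi> i j k t" if i: "i < s" and j: "j < N" and k: "k < N" and t: "t \<noteq> 0"
    for t i j k
  proof -
    have e: "Y t ! i $$ (j,k) = dg j t * dg k t * (al i j k + t^3 * be i j k + t^3 * ga i j k + t^3 * t^3 * de i j k)"
      using entry[OF i j k] .
    show ?thesis
    proof (cases "j < l \<and> k < l")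
      case True
      then have "al i j k = 0" unfolding al_def using isoA[OF i _ _ j k] by simp
      then show ?thesis unfolding e \<Phi>_def dg_def using True t
        by (simp add: field_simps power2_eq_square power3_eq_cube power4_eq_xxxx)
    next
      case False
      then show ?thesis unfolding e \<Phi>_def dg_def using t
        by (auto simp: field_simps power2_eq_square)
    qed
  qed
  have cont\<Phi>: "isCont (\<Phi> i j k) 0" for i j k
    unfolding \<Phi>_def by (cases "j < l"; cases "k < l") (simp_all; intro continuous_intros)+
  have \<Phi>0: "\<Phi> i j k 0 = tuple_coord M' (i,j,k)" if i: "i < s" and j: "j < N" and k: "k < N" for i j k
    unfolding tuple_coord_def using M'i[OF i j k] unfolding \<Phi>_def al_def by auto
  have lim: "\<forall>v\<in>tuple_vars s N. ((\<lambda>t. tuple_coord (Y t) v) \<longlongrightarrow> tuple_coord M' v) (at 0)"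
  proof
    fix v assume "v \<in> tuple_vars s N"
    then obtain i j k where v: "v = (i,j,k)" and i: "i < s" and j: "j < N" and k: "k < N"
      unfolding tuple_vars_def by auto
    have "(\<Phi> i j k \<longlongrightarrow> \<Phi> i j k 0) (at 0)" using cont\<Phi> unfolding isCont_def by blast
    moreover have "eventually (\<lambda>t. \<Phi> i j k t = tuple_coord (Y t) v) (at 0)"
      unfolding eventually_at_filter v tuple_coord_def using entry\<Phi>[OF i j k] by simp
    ultimately have "((\<lambda>t. tuple_coord (Y t) v) \<longlongrightarrow> \<Phi> i j k 0) (at 0)" by (rule Lim_transform_eventually)
    then show "((\<lambda>t. tuple_coord (Y t) v) \<longlongrightarrow> tuple_coord M' v) (at 0)" using \<Phi>0[OF i j k] v by simp
  qed
  define bad where "bad = {t. - (t^3) \<in> spectrum A}"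
  have fbad: "finite bad" unfolding bad_def using finite_cube_preimage card_finite_spectrum(1)[OF A] by blast
  have orb: "Y t \<in> congr_orbit N M" if tb: "t \<notin> bad" and t0: "t \<noteq> 0" for t
  proof -
    define Dg where "Dg = mat N N (\<lambda>(j,c). if j = c then dg j t else 0)"
    have Dg: "Dg \<in> carrier_mat N N" unfolding Dg_def by simp
    have gDQ: "g t = Dg * Q t"
    proof (rule eq_matI)
      fix j c assume "j < dim_row (Dg * Q t)" "c < dim_col (Dg * Q t)"
      then have j: "j < N" and c: "c < N" using Dg Q[of t] by auto
      have "(Dg * Q t) $$ (j,c) = (\<Sum>a = 0..<N. Dg $$ (j,a) * Q t $$ (a,c))"
        using j c Dg Q[of t] by (simp add: scalar_prod_def)
      also have "\<dots> = Dg $$ (j,j) * Q t $$ (j,c)"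
        using j by (intro sum_one) (auto simp: Dg_def)
      finally show "g t $$ (j,c) = (Dg * Q t) $$ (j,c)" using j c unfolding g_def Dg_def by simp
    qed (use Dg Q[of t] g[of t] in auto)
    have "det Dg = prod_list (diag_mat Dg)"
      using Dg by (intro det_upper_triangular) (auto simp: upper_triangular_def Dg_def)
    moreover have "0 \<notin> set (diag_mat Dg)" using t0 by (auto simp: diag_mat_def Dg_def dg_def)
    ultimately have dD: "det Dg \<noteq> 0" by (simp add: prod_list_zero_iff)
    have "Q t = char_matrix A (- (t^3))" unfolding Q_def char_matrix_def using A by simp
    moreover have "\<not> eigenvalue A (- (t^3))" using tb unfolding bad_def spectrum_def by simp
    ultimately have dQ: "det (Q t) \<noteq> 0" using eigenvalue_det[OF A] by simp
    have "det (g t) \<noteq> 0" unfolding gDQ using det_mult[OF Dg Q] dD dQ by simp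
    then obtain Bi where Bi: "Bi \<in> carrier_mat N N" "g t * Bi = 1\<^sub>m N" "Bi * g t = 1\<^sub>m N"
      using det_inverse[OF g] by blast
    have "invertible_mat (g t)"
      unfolding invertible_mat_def inverts_mat_def using g[of t] Bi by auto
    then show ?thesis unfolding congr_orbit_def Y_def using g by blast
  qed
  have ev: "eventually (\<lambda>t. Y t \<in> congr_orbit N M) (at 0)"
  proof -
    have "eventually (\<lambda>t. t \<notin> bad) (at 0)" using eventually_not_in_finite[OF fbad] .
    moreover have "eventually (\<lambda>t. t \<noteq> (0::complex)) (at 0)" by (simp add: eventually_at_filter)
    ultimately show ?thesis by eventually_elim (use orb in auto)
  qed
  have cl: "M' \<in> zariski_closure tuple_coord (tuple_vars s N) (tuple_space s N) (congr_orbit N M)"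
    by (rule closure_by_limit[OF M'T lim at_neq_bot ev])
  show ?thesis using cl M'sym propA propB unfolding s_def by blast
qed

end
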